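(* For every real $\lambda$ and $n\in\{0,2\}$, define $$I_n(\lambda)=\int_0^\infty \frac{\operatorname{erfc}\big(\sqrt{s^2+\lambda^2}\big)}{\sqrt{s^2+\lambda^2}}\,s^{n+1}\,ds,\qquad K_n(\lambda)=\int_0^\infty \frac{\phi_3\big(\sqrt{s^2+\lambda^2}\big)}{(s^2+\lambda^2)^{5/2}}\,s^{n+5}\,ds,$$ where $\phi_3(t)=1-s_3(t)$ and $s_3(t)=\operatorname{erf}(t)-\frac{2}{\sqrt\pi}\big(\frac23 t^3+t\big)e^{-t^2}$. Then $$K_0=\tfrac83\,I_0,\qquad K_2=8\,I_2$$ as functions of $\lambda$.
   Context: $\operatorname{erf}(r)=\frac{2}{\sqrt\pi}\int_0^r e^{-s^2}\,ds$ and $\operatorname{erfc}=1-\operatorname{erf}$. *)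

theory Defs
  imports "HOL-Analysis.Analysis"
begin

definition erf :: "real \<Rightarrow> real" where
  "erf r = 2 / sqrt pi * (LBINT s=0..r. exp (- (s^2)))"

definition erfc :: "real \<Rightarrow> real" where
  "erfc r = 1 - erf r"

definition s3 :: "real \<Rightarrow> real" where
  "s3 t = erf t - 2 / sqrt pi * (2/3 * t^3 + t) * exp (- (t^2))"

definition phi3 :: "real \<Rightarrow> real" where
  "phi3 t = 1 - s3 t"

definition I_int :: "nat \<Rightarrow> real \<Rightarrow> real" where
  "I_int n l = (LBINT s:{0<..}. erfc (sqrt (s^2 + l^2)) / sqrt (s^2 + l^2) * s ^ (n + 1))"

definition K_int :: "nat \<Rightarrow> real \<Rightarrow> real" where
  "K_int n l = (LBINT s:{0<..}. phi3 (sqrt (s^2 + l^2)) / (s^2 + l^2) powr (5/2) * s ^ (n + 5))"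

end

theory Submission imports Defs "HOL-Probability.Distributions" "HOL-Real_Asymp.Real_Asymp" begin


lemma erf_tendsto: "(erf \<longlongrightarrow> 1) at_top"
proof -
  have int: "integrable lborel (\<lambda>x::real. indicator {0..} x *\<^sub>R exp (- x\<^sup>2))"
    and val: "(\<integral>x. indicator {0..} x *\<^sub>R exp (- x\<^sup>2) \<partial>lborel) = sqrt pi / 2"
    using gaussian_moment_0 by (auto simp: has_bochner_integral_iff)
  have t: "((\<lambda>y. \<integral> x. indicator {.. y} x *\<^sub>R (indicator {0..} x *\<^sub>R exp (- x\<^sup>2)) \<partial>lborel) \<longlongrightarrow> sqrt pi / 2) at_top"
    using tendsto_integral_at_top[OF sets_lborel int] unfolding val .
  have eq: "(\<integral> x. indicator {.. y} x *\<^sub>R (indicator {0..} x *\<^sub>R exp (- x\<^sup>2)) \<partial>lborel) = (LBINT s=0..y. exp (- (s^2)))"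
    if "(y::real) \<ge> 0" for y :: real
  proof -
    have "(\<lambda>x::real. indicator {.. y} x *\<^sub>R (indicator {0..} x *\<^sub>R exp (- x\<^sup>2))) = (\<lambda>x. indicator {0..y} x *\<^sub>R exp (- x\<^sup>2))"
      by (auto simp: indicator_def)
    moreover have "(LBINT s=ereal 0..ereal y. exp (- (s^2))) = (LBINT s:{0..y}. exp (- (s^2)))"
      using that by (rule interval_integral_Icc)
    ultimately show ?thesis by (simp add: zero_ereal_def set_lebesgue_integral_def)
  qed
  have "((\<lambda>y::real. 2 / sqrt pi * (LBINT s=0..y. exp (- (s^2)))) \<longlongrightarrow> 2 / sqrt pi * (sqrt pi / 2)) at_top"
  proof (rule tendsto_mult_left)
    have ev: "\<forall>\<^sub>F (y::real) in at_top. (\<integral> x. indicator {.. y} x *\<^sub>R (indicator {0..} x *\<^sub>R exp (- x\<^sup>2)) \<partial>lborel) = (LBINT s=0..y. exp (- (s^2)))"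
      using eventually_ge_at_top[of "0::real"] by (rule eventually_mono) (rule eq)
    show "((\<lambda>y::real. LBINT s=0..y. exp (- (s^2))) \<longlongrightarrow> sqrt pi / 2) at_top"
      using Lim_transform_eventually[OF t ev] .
  qed
  then show ?thesis unfolding erf_def[abs_def] by simp
qed

lemma erf_deriv: "DERIV erf x :> 2 / sqrt pi * exp (- (x^2))"
proof -
  define b where "b = \<bar>x\<bar> + 1"
  have bb: "-b \<le> 0" "0 \<le> b" "-b \<le> x" "x \<le> b" by (auto simp: b_def)
  have c: "continuous_on {-b..b} (\<lambda>y. exp (- (y^2)))" by (intro continuous_intros)
  have "((\<lambda>u. LBINT y=ereal 0..ereal u. exp (- (y^2))) has_vector_derivative exp (- (x^2))) (at x within {-b..b})"
    by (rule interval_integral_FTC2[OF bb(1,2) c bb(3,4)])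
  then have "((\<lambda>u. LBINT y=0..u. exp (- (y^2))) has_vector_derivative exp (- (x^2))) (at x within {-b..b})"
    unfolding zero_ereal_def .
  moreover have "x \<in> interior {-b..b}" by (auto simp: b_def)
  ultimately have "((\<lambda>u. LBINT y=0..u. exp (- (y^2))) has_real_derivative exp (- (x^2))) (at x)"
    by (subst (asm) at_within_interior[of x]) (auto simp: has_real_derivative_iff_has_vector_derivative)
  then have "((\<lambda>u. 2 / sqrt pi * (LBINT y=0..u. exp (- (y^2)))) has_real_derivative 2 / sqrt pi * exp (- (x^2))) (at x)"
    by (rule DERIV_cmult)
  then show ?thesis by (simp only: erf_def[abs_def])
qed

lemma erfc_deriv: "DERIV erfc x :> - (2 / sqrt pi * exp (- (x^2)))"
proof -
  have "DERIV (\<lambda>x. 1 - erf x) x :> 0 - 2 / sqrt pi * exp (- (x^2))"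
    by (rule DERIV_diff[OF DERIV_const erf_deriv])
  then show ?thesis by (simp add: erfc_def[abs_def])
qed

lemma erfc_deriv_chain[derivative_intros]:
  "(f has_real_derivative f') (at x within S) \<Longrightarrow>
   ((\<lambda>x. erfc (f x)) has_real_derivative (- (2 / sqrt pi * exp (- ((f x)^2)))) * f') (at x within S)"
  by (rule DERIV_chain2[OF erfc_deriv])

lemma phi3_deriv: "DERIV phi3 t :> - (8 / (3 * sqrt pi)) * t^4 * exp (- (t^2))"
proof -
  have "DERIV (\<lambda>t. 1 - (erf t - 2 / sqrt pi * (2/3 * t^3 + t) * exp (- (t^2)))) t :> - (8 / (3 * sqrt pi)) * t^4 * exp (- (t^2))"
    apply (rule derivative_eq_intros refl erf_deriv)+
    apply (simp add: field_simps)
    apply (simp add: algebra_simps power2_eq_square power4_eq_xxxx power3_eq_cube)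
    done
  moreover have "phi3 = (\<lambda>t. 1 - (erf t - 2 / sqrt pi * (2/3 * t^3 + t) * exp (- (t^2))))"
    by (auto simp: phi3_def[abs_def] s3_def)
  ultimately show ?thesis by simp
qed

lemma phi3_deriv_chain[derivative_intros]:
  "(f has_real_derivative f') (at x within S) \<Longrightarrow>
   ((\<lambda>x. phi3 (f x)) has_real_derivative (- (8 / (3 * sqrt pi)) * (f x)^4 * exp (- ((f x)^2))) * f') (at x within S)"
  by (rule DERIV_chain2[OF phi3_deriv])

lemma isCont_erfc: "isCont erfc x" using erfc_deriv by (rule DERIV_isCont)
lemma isCont_phi3: "isCont phi3 x" using phi3_deriv by (rule DERIV_isCont)

lemma tendsto_erfc[tendsto_intros]: "(f \<longlongrightarrow> a) F \<Longrightarrow> ((\<lambda>x. erfc (f x)) \<longlongrightarrow> erfc a) F"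
  by (rule isCont_tendsto_compose[OF isCont_erfc])
lemma tendsto_phi3[tendsto_intros]: "(f \<longlongrightarrow> a) F \<Longrightarrow> ((\<lambda>x. phi3 (f x)) \<longlongrightarrow> phi3 a) F"
  by (rule isCont_tendsto_compose[OF isCont_phi3])
lemma continuous_erfc[continuous_intros]: "continuous F f \<Longrightarrow> continuous F (\<lambda>x. erfc (f x))"
  unfolding continuous_def by (rule tendsto_erfc)
lemma continuous_phi3[continuous_intros]: "continuous F f \<Longrightarrow> continuous F (\<lambda>x. phi3 (f x))"
  unfolding continuous_def by (rule tendsto_phi3)

lemma erfc_tendsto: "(erfc \<longlongrightarrow> 0) at_top"
  unfolding erfc_def[abs_def] using tendsto_diff[OF tendsto_const erf_tendsto, of 1] by simp

lemma phi3_tendsto: "(phi3 \<longlongrightarrow> 0) at_top"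
proof -
  have "((\<lambda>t. 2 / sqrt pi * (2/3 * t^3 + t) * exp (- (t^2))) \<longlongrightarrow> 0) at_top" by real_asymp
  from tendsto_add[OF erfc_tendsto this] show ?thesis
    unfolding phi3_def[abs_def] s3_def erfc_def by (simp add: algebra_simps)
qed

lemma nonneg_from_antimono:
  fixes f f' :: "real \<Rightarrow> real"
  assumes d: "\<And>x. x \<ge> t \<Longrightarrow> DERIV f x :> f' x" and n: "\<And>x. x \<ge> t \<Longrightarrow> f' x \<le> 0"
    and lim: "(f \<longlongrightarrow> 0) at_top"
  shows "f t \<ge> 0"
proof -
  have "\<forall>\<^sub>F x in at_top. f x \<le> f t"
    using eventually_ge_at_top[of t]
  proof (rule eventually_mono)
    fix x assume "t \<le> x"
    then show "f x \<le> f t"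
      by (intro DERIV_nonpos_imp_nonincreasing[of t x f]) (use d n in auto)
  qed
  from tendsto_upperbound[OF lim this] show ?thesis by simp
qed

lemma erfc_nonneg: "erfc t \<ge> 0"
  by (rule nonneg_from_antimono[OF erfc_deriv _ erfc_tendsto]) auto

lemma phi3_nonneg: "t \<ge> 0 \<Longrightarrow> phi3 t \<ge> 0"
  by (rule nonneg_from_antimono[OF phi3_deriv _ phi3_tendsto]) auto

lemma sp: "sqrt pi * (sqrt pi * x) = pi * x" "sqrt pi * sqrt pi = pi"
  by (simp_all add: mult.assoc[symmetric])

lemma erfc_bound: assumes "t > 0" shows "erfc t \<le> exp (- (t^2)) / (sqrt pi * t)"
proof -
  let ?g = "\<lambda>x. exp (- (x^2)) / (sqrt pi * x) - erfc x"
  have "?g t \<ge> 0"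
  proof (rule nonneg_from_antimono[where f = ?g and f' = "\<lambda>x. - (exp (- (x^2)) / (sqrt pi * x^2))"])
    fix x assume "x \<ge> t"
    then have x: "x > 0" using assms by simp
    show "DERIV ?g x :> (- (exp (- (x^2)) / (sqrt pi * x^2)))"
      using x by (auto intro!: derivative_eq_intros erfc_deriv simp: field_simps power2_eq_square sp)
    show "- (exp (- (x^2)) / (sqrt pi * x^2)) \<le> 0" by simp
  next
    have "((\<lambda>x. exp (- (x^2)) / (sqrt pi * x)) \<longlongrightarrow> 0) at_top" by real_asymp
    from tendsto_diff[OF this erfc_tendsto] show "(?g \<longlongrightarrow> 0) at_top" by simp
  qed
  then show ?thesis by simp
qed

lemma erfc_pow_tendsto: assumes lim: "((\<lambda>t. exp (- (t^2)) / (sqrt pi * t) * t^k) \<longlongrightarrow> 0) at_top"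
  shows "((\<lambda>t. erfc t * t^k) \<longlongrightarrow> 0) at_top"
proof (rule tendsto_sandwich[of "\<lambda>_. 0" _ _ "\<lambda>t. exp (- (t^2)) / (sqrt pi * t) * t^k"])
  show "\<forall>\<^sub>F n in at_top. 0 \<le> erfc n * n ^ k"
    using eventually_ge_at_top[of 0] by eventually_elim (simp add: erfc_nonneg)
  show "\<forall>\<^sub>F n in at_top. erfc n * n ^ k \<le> exp (- (n^2)) / (sqrt pi * n) * n^k"
    using eventually_gt_at_top[of 0] by eventually_elim (intro mult_right_mono erfc_bound, auto)
qed (use lim in simp_all)

lemma erfc_pow1: "((\<lambda>t. erfc t * t^1) \<longlongrightarrow> 0) at_top"
  by (rule erfc_pow_tendsto) real_asymp
lemma erfc_pow3: "((\<lambda>t. erfc t * t^3) \<longlongrightarrow> 0) at_top"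
  by (rule erfc_pow_tendsto) real_asymp




lemma FTC0:
  fixes F f :: "real \<Rightarrow> real"
  assumes d: "\<And>s. s > 0 \<Longrightarrow> DERIV F s :> f s" and c: "\<And>s. s > 0 \<Longrightarrow> isCont f s"
    and n: "\<And>s. s > 0 \<Longrightarrow> f s \<ge> 0"
    and A: "(F \<longlongrightarrow> A) (at_right 0)" and B: "(F \<longlongrightarrow> B) at_top"
  shows "(LBINT s:{0<..}. f s) = B - A"
proof -
  have "(LBINT x=ereal 0..\<infinity>. f x) = B - A"
    by (rule interval_integral_FTC_nonneg[where F=F]) (use d c n A B in \<open>auto simp: ereal_tendsto_simps\<close>)
  then show ?thesis by (simp add: interval_lebesgue_integral_def)
qed

lemma chain_r:
  assumes "L \<ge> 0" "s > 0" "DERIV H (sqrt (s^2 + L)) :> h"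
  shows "DERIV (\<lambda>s. H (sqrt (s^2 + L))) s :> h * (s / sqrt (s^2 + L))"
proof -
  have p: "s^2 + L > 0" using assms by (simp add: add_pos_nonneg)
  have "DERIV (\<lambda>s. sqrt (s^2 + L)) s :> inverse (sqrt (s^2 + L)) / 2 * (2 * s)"
  proof -
    have "DERIV (\<lambda>s. s^2 + L) s :> 2 * s" by (auto intro!: derivative_eq_intros)
    from DERIV_chain2[OF DERIV_real_sqrt[OF p] this] show ?thesis .
  qed
  then have "DERIV (\<lambda>s. sqrt (s^2 + L)) s :> s / sqrt (s^2 + L)"
    by (simp add: field_simps)
  from DERIV_chain2[OF assms(3) this] show ?thesis .
qed

definition Y0 :: "real \<Rightarrow> real \<Rightarrow> real" where "Y0 L r = - (exp (-(r^2)) * 1) / 2"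
definition Q2 :: "real \<Rightarrow> real \<Rightarrow> real" where "Q2 L r = r^3/3 - L*r"
definition Y2 :: "real \<Rightarrow> real \<Rightarrow> real" where "Y2 L r = - (exp (-(r^2)) * ((r^2 + 1 - 3*L)/3)) / 2"
definition G0 :: "real \<Rightarrow> real \<Rightarrow> real" where "G0 L r = erfc r * r + 2/sqrt pi * Y0 L r"
definition G2 :: "real \<Rightarrow> real \<Rightarrow> real" where "G2 L r = erfc r * Q2 L r + 2/sqrt pi * Y2 L r"
definition P0 :: "real \<Rightarrow> real \<Rightarrow> real" where "P0 L r = r + 2*L/r - L^2/(3*r^3)"
definition Z0 :: "real \<Rightarrow> real \<Rightarrow> real" where "Z0 L r = - (exp(-(r^2)) * (r^4 + 2*r^2 + 2 + 2*L*(r^2+1) - L^2/3)) / 2"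
definition H0 :: "real \<Rightarrow> real \<Rightarrow> real" where "H0 L r = phi3 r * P0 L r + 4/3*(2/sqrt pi) * Z0 L r"
definition P2 :: "real \<Rightarrow> real \<Rightarrow> real" where "P2 L r = r^3/3 - 3*L*r - 3*L^2/r + L^3/(3*r^3)"
definition Z2 :: "real \<Rightarrow> real \<Rightarrow> real" where "Z2 L r = - (exp(-(r^2)) * ((r^6+3*r^4+6*r^2+6)/3 - 3*L*(r^4+2*r^2+2) - 3*L^2*(r^2+1) + L^3/3)) / 2"
definition H2 :: "real \<Rightarrow> real \<Rightarrow> real" where "H2 L r = phi3 r * P2 L r + 4/3*(2/sqrt pi) * Z2 L r"

lemma P0_deriv: assumes "r > 0" shows "DERIV (P0 L) r :> 1 - 2*L/r^2 + L^2/r^4"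
  unfolding P0_def[abs_def]
  using assms apply (auto intro!: derivative_eq_intros)
  using assms apply (simp add: field_simps)
  apply (simp add: eval_nat_numeral)
  done

lemma P2_deriv: assumes "r > 0" shows "DERIV (P2 L) r :> r^2 - 3*L + 3*L^2/r^2 - L^3/r^4"
  unfolding P2_def[abs_def]
  using assms apply (auto intro!: derivative_eq_intros)
  using assms apply (simp add: field_simps)
  apply (simp add: eval_nat_numeral)
  done

lemma gauss_deriv: fixes W :: "real \<Rightarrow> real" assumes "DERIV W r :> W'"
  shows "DERIV (\<lambda>r. - (exp (-(r^2)) * W r) / 2) r :> (r * W r - W' / 2) * exp (-(r^2))"
  by (auto intro!: derivative_eq_intros assms simp: field_simps)

lemma Z0_deriv: "DERIV (Z0 L) r :> (r^5 + 2*L*r^3 - L^2*r/3) * exp (-(r^2))"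
proof -
  have W: "DERIV (\<lambda>r. r^4 + 2*r^2 + 2 + 2*L*(r^2+1) - L^2/3) r :> 4*r^3 + 4*r + 4*L*r"
    by (auto intro!: derivative_eq_intros simp: algebra_simps)
  have e: "r * (r^4 + 2*r^2 + 2 + 2*L*(r^2+1) - L^2/3) - (4*r^3 + 4*r + 4*L*r) / 2 = r^5 + 2*L*r^3 - L^2*r/3"
    by algebra
  show ?thesis using gauss_deriv[OF W] unfolding e Z0_def[abs_def] .
qed

lemma Z2_deriv: "DERIV (Z2 L) r :> (r^7/3 - 3*L*r^5 - 3*L^2*r^3 + L^3*r/3) * exp (-(r^2))"
proof -
  have W: "DERIV (\<lambda>r. (r^6+3*r^4+6*r^2+6)/3 - 3*L*(r^4+2*r^2+2) - 3*L^2*(r^2+1) + L^3/3) r :> (6*r^5+12*r^3+12*r)/3 - 3*L*(4*r^3+4*r) - 3*L^2*(2*r)"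
    by (auto intro!: derivative_eq_intros simp: algebra_simps)
  have e: "r * ((r^6+3*r^4+6*r^2+6)/3 - 3*L*(r^4+2*r^2+2) - 3*L^2*(r^2+1) + L^3/3) - ((6*r^5+12*r^3+12*r)/3 - 3*L*(4*r^3+4*r) - 3*L^2*(2*r)) / 2 = r^7/3 - 3*L*r^5 - 3*L^2*r^3 + L^3*r/3"
    by algebra
  show ?thesis using gauss_deriv[OF W] unfolding e Z2_def[abs_def] .
qed

lemma erfc_comb:
  fixes Pf Y :: "real \<Rightarrow> real"
  assumes "DERIV Pf r :> p" "DERIV Y r :> Pf r * exp (-(r^2))"
  shows "DERIV (\<lambda>r. erfc r * Pf r + 2/sqrt pi * Y r) r :> erfc r * p"
proof -
  have "DERIV (\<lambda>r. erfc r * Pf r + 2/sqrt pi * Y r) r :>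
      (- (2 / sqrt pi * exp (- (r^2)))) * Pf r + p * erfc r + 2/sqrt pi * (Pf r * exp (-(r^2)))"
    by (intro DERIV_add DERIV_mult erfc_deriv DERIV_cmult assms)
  then show ?thesis by (simp add: algebra_simps)
qed

lemma phi3_comb:
  fixes Pf Z :: "real \<Rightarrow> real"
  assumes "DERIV Pf r :> p" "DERIV Z r :> r^4 * Pf r * exp (-(r^2))"
  shows "DERIV (\<lambda>r. phi3 r * Pf r + 4/3*(2/sqrt pi) * Z r) r :> phi3 r * p"
proof -
  have "DERIV (\<lambda>r. phi3 r * Pf r + 4/3*(2/sqrt pi) * Z r) r :>
      (- (8 / (3 * sqrt pi)) * r^4 * exp (- (r^2))) * Pf r + p * phi3 r + 4/3*(2/sqrt pi) * (r^4 * Pf r * exp (-(r^2)))"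
    by (intro DERIV_add DERIV_mult phi3_deriv DERIV_cmult assms)
  then show ?thesis by (simp add: algebra_simps)
qed

lemma Y0_deriv: "DERIV (Y0 L) r :> r * exp (-(r^2))"
proof -
  have W: "DERIV (\<lambda>r::real. 1) r :> 0" by (rule DERIV_const)
  show ?thesis using gauss_deriv[OF W] unfolding Y0_def[abs_def] by simp
qed

lemma Y2_deriv: "DERIV (Y2 L) r :> Q2 L r * exp (-(r^2))"
proof -
  have W: "DERIV (\<lambda>r. (r^2 + 1 - 3*L)/3) r :> 2*r/3"
    by (auto intro!: derivative_eq_intros)
  have e: "r * ((r^2 + 1 - 3*L)/3) - 2*r/3 / 2 = Q2 L r"
    by (simp add: Q2_def field_simps power2_eq_square power3_eq_cube)
  show ?thesis using gauss_deriv[OF W] unfolding e Y2_def[abs_def] .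
qed

lemma Q2_deriv: "DERIV (Q2 L) r :> r^2 - L"
  unfolding Q2_def[abs_def] by (auto intro!: derivative_eq_intros)

lemma G0_deriv: "DERIV (G0 L) r :> erfc r"
proof -
  have "DERIV (\<lambda>r. erfc r * (\<lambda>r. r) r + 2/sqrt pi * Y0 L r) r :> erfc r * 1"
    by (rule erfc_comb) (auto intro!: derivative_eq_intros Y0_deriv)
  then show ?thesis by (simp add: G0_def[abs_def])
qed

lemma G2_deriv: "DERIV (G2 L) r :> erfc r * (r^2 - L)"
  unfolding G2_def[abs_def] by (rule erfc_comb[OF Q2_deriv Y2_deriv])

lemma H0_deriv: assumes "r > 0" shows "DERIV (H0 L) r :> phi3 r * (1 - 2*L/r^2 + L^2/r^4)"
proof -
  have e: "r^4 * P0 L r = r^5 + 2*L*r^3 - L^2*r/3"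
    using assms by (simp add: P0_def field_simps) (simp add: eval_nat_numeral)
  have z: "DERIV (Z0 L) r :> r^4 * P0 L r * exp (-(r^2))"
    unfolding e by (rule Z0_deriv)
  show ?thesis unfolding H0_def[abs_def] by (rule phi3_comb[OF P0_deriv[OF assms] z])
qed

lemma H2_deriv: assumes "r > 0" shows "DERIV (H2 L) r :> phi3 r * (r^2 - 3*L + 3*L^2/r^2 - L^3/r^4)"
proof -
  have e: "r^4 * P2 L r = r^7/3 - 3*L*r^5 - 3*L^2*r^3 + L^3*r/3"
    using assms by (simp add: P2_def field_simps) (simp add: eval_nat_numeral)
  have z: "DERIV (Z2 L) r :> r^4 * P2 L r * exp (-(r^2))"
    unfolding e by (rule Z2_deriv)
  show ?thesis unfolding H2_def[abs_def] by (rule phi3_comb[OF P2_deriv[OF assms] z])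
qed



lemma sqrt_lim: "filterlim (\<lambda>s::real. sqrt (s^2 + L)) at_top at_top" by real_asymp

lemma phi3_alt: "phi3 t = erfc t + 2/sqrt pi * (2/3*t^3+t) * exp (-(t^2))"
  by (simp add: phi3_def s3_def erfc_def)

lemma phiP_lim:
  assumes "((\<lambda>r. P r / r^3) \<longlongrightarrow> p) at_top" "((\<lambda>r. (2/3*r^3+r) * exp (-(r^2)) * P r) \<longlongrightarrow> 0) at_top"
  shows "((\<lambda>r. phi3 r * P r) \<longlongrightarrow> 0) at_top"
proof -
  have "((\<lambda>r. erfc r * r^3 * (P r / r^3) + 2/sqrt pi * ((2/3*r^3+r) * exp (-(r^2)) * P r)) \<longlongrightarrow> 0 * p + 2/sqrt pi * 0) at_top"
    by (intro tendsto_intros erfc_pow3 assms)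
  moreover have "\<forall>\<^sub>F r in at_top. erfc r * r^3 * (P r / r^3) + 2/sqrt pi * ((2/3*r^3+r) * exp (-(r^2)) * P r) = phi3 r * P r"
    using eventually_gt_at_top[of 0] by eventually_elim (simp add: phi3_alt field_simps)
  ultimately show ?thesis using Lim_transform_eventually by fastforce
qed

lemma G0_lim: "(G0 L \<longlongrightarrow> 0) at_top"
proof -
  have e1: "(Y0 L \<longlongrightarrow> 0) at_top" unfolding Y0_def[abs_def] by real_asymp
  have "((\<lambda>r. erfc r * r^1 + 2/sqrt pi * Y0 L r) \<longlongrightarrow> 0 + 2/sqrt pi * 0) at_top"
    by (rule tendsto_add[OF erfc_pow1 tendsto_mult_left[OF e1]])
  then show ?thesis by (simp add: G0_def[abs_def])
qed

lemma G2_lim: "(G2 L \<longlongrightarrow> 0) at_top"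
proof -
  have e1: "(Y2 L \<longlongrightarrow> 0) at_top" unfolding Y2_def[abs_def] by real_asymp
  have a: "((\<lambda>r. erfc r * r^3 * (1/3) - L * (erfc r * r^1)) \<longlongrightarrow> 0 * (1/3) - L * 0) at_top"
    by (rule tendsto_diff[OF tendsto_mult_right[OF erfc_pow3] tendsto_mult_left[OF erfc_pow1]])
  have "((\<lambda>r. (erfc r * r^3 * (1/3) - L * (erfc r * r^1)) + 2/sqrt pi * Y2 L r) \<longlongrightarrow> (0 * (1/3) - L * 0) + 2/sqrt pi * 0) at_top"
    by (rule tendsto_add[OF a tendsto_mult_left[OF e1]])
  moreover have "(\<lambda>r. (erfc r * r^3 * (1/3) - L * (erfc r * r^1)) + 2/sqrt pi * Y2 L r) = G2 L"
    by (auto simp: G2_def[abs_def] Q2_def algebra_simps power3_eq_cube)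
  ultimately show ?thesis by simp
qed

lemma H0_lim: "(H0 L \<longlongrightarrow> 0) at_top"
proof -
  have a: "((\<lambda>r. phi3 r * P0 L r) \<longlongrightarrow> 0) at_top"
    by (rule phiP_lim) (unfold P0_def; real_asymp)+
  have e1: "(Z0 L \<longlongrightarrow> 0) at_top" unfolding Z0_def[abs_def] by real_asymp
  have "((\<lambda>r. phi3 r * P0 L r + 4/3*(2/sqrt pi) * Z0 L r) \<longlongrightarrow> 0 + 4/3*(2/sqrt pi) * 0) at_top"
    by (rule tendsto_add[OF a tendsto_mult_left[OF e1]])
  then show ?thesis by (simp add: H0_def[abs_def])
qed

lemma H2_lim: "(H2 L \<longlongrightarrow> 0) at_top"
proof -
  have a: "((\<lambda>r. phi3 r * P2 L r) \<longlongrightarrow> 0) at_top"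
    by (rule phiP_lim) (unfold P2_def; real_asymp)+
  have e1: "(Z2 L \<longlongrightarrow> 0) at_top" unfolding Z2_def[abs_def] by real_asymp
  have "((\<lambda>r. phi3 r * P2 L r + 4/3*(2/sqrt pi) * Z2 L r) \<longlongrightarrow> 0 + 4/3*(2/sqrt pi) * 0) at_top"
    by (rule tendsto_add[OF a tendsto_mult_left[OF e1]])
  then show ?thesis by (simp add: H2_def[abs_def])
qed

lemma G0_cont: "isCont (G0 L) x" using G0_deriv[of L x] by (rule DERIV_isCont)
lemma G2_cont: "isCont (G2 L) x" using G2_deriv[of L x] by (rule DERIV_isCont)

lemma H0_cont: assumes "L \<ge> 0" shows "isCont (H0 L) (sqrt L)"
proof (cases "L = 0")
  case True
  have "H0 L = (\<lambda>r. phi3 r * r + 4/3*(2/sqrt pi) * Z0 0 r)"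
    using True by (intro ext) (simp add: H0_def P0_def)
  then show ?thesis unfolding Z0_def by (simp add: continuous_intros)
next
  case False
  then have "sqrt L > 0" using assms by simp
  from H0_deriv[OF this] show ?thesis by (rule DERIV_isCont)
qed

lemma H2_cont: assumes "L \<ge> 0" shows "isCont (H2 L) (sqrt L)"
proof (cases "L = 0")
  case True
  have "H2 L = (\<lambda>r. phi3 r * (r^3/3) + 4/3*(2/sqrt pi) * Z2 0 r)"
    using True by (intro ext) (simp add: H2_def P2_def)
  then show ?thesis unfolding Z2_def by (simp add: continuous_intros)
next
  case False
  then have "sqrt L > 0" using assms by simp
  from H2_deriv[OF this] show ?thesis by (rule DERIV_isCont)
qed

lemma integral_eval:
  fixes Hr h f :: "real \<Rightarrow> real"
  assumes L: "L \<ge> 0" and d: "\<And>r. r > 0 \<Longrightarrow> DERIV Hr r :> h r" and cont: "isCont Hr (sqrt L)"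
    and lim: "(Hr \<longlongrightarrow> 0) at_top"
    and f: "\<And>s. s > 0 \<Longrightarrow> h (sqrt (s^2 + L)) * (s / sqrt (s^2 + L)) = f s"
    and c: "\<And>s. s > 0 \<Longrightarrow> isCont f s" and n: "\<And>s. s > 0 \<Longrightarrow> f s \<ge> 0"
  shows "(LBINT s:{0<..}. f s) = - Hr (sqrt L)"
proof -
  have "(LBINT s:{0<..}. f s) = 0 - Hr (sqrt L)"
  proof (rule FTC0[where F = "\<lambda>s. Hr (sqrt (s^2 + L))"])
    fix s :: real assume s: "s > 0"
    then have p: "sqrt (s^2 + L) > 0" using L by (simp add: add_pos_nonneg)
    show "DERIV (\<lambda>s. Hr (sqrt (s^2 + L))) s :> f s"
      using chain_r[OF L s d[OF p]] f[OF s] by simp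
  next
    have t0: "((\<lambda>s::real. sqrt (s^2 + L)) \<longlongrightarrow> sqrt (0^2 + L)) (at_right 0)"
      by (intro tendsto_intros)
    then have t: "((\<lambda>s::real. sqrt (s^2 + L)) \<longlongrightarrow> sqrt L) (at_right 0)" by simp
    show "((\<lambda>s. Hr (sqrt (s^2 + L))) \<longlongrightarrow> Hr (sqrt L)) (at_right 0)"
      using isCont_tendsto_compose[OF cont t] by simp
  next
    show "((\<lambda>s. Hr (sqrt (s^2 + L))) \<longlongrightarrow> 0) at_top"
      by (rule filterlim_compose[OF lim sqrt_lim])
  qed (use c n in auto)
  then show ?thesis by simp
qed

lemma powr52: "(x::real) > 0 \<Longrightarrow> x powr (5/2) = x^2 * sqrt x"
proof -
  assume x: "x > 0"
  have h: "x powr (1/2) = sqrt x" by (rule powr_half_sqrt) (use x in simp)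
  have "x powr (5/2) = x powr (2 + 1/2)" by simp
  also have "\<dots> = x powr 2 * x powr (1/2)" by (rule powr_add)
  also have "\<dots> = x^2 * sqrt x" unfolding h using x by (simp add: powr_numeral)
  finally show ?thesis .
qed

lemma alg0: fixes r s L p :: real assumes "r > 0" "L = r^2 - s^2"
  shows "p * (1 - 2*L/r^2 + L^2/r^4) * (s / r) = p / ((r^2)^2 * r) * s^5"
  using assms(1) unfolding assms(2) by (simp add: field_simps) algebra

lemma alg2: fixes r s L p :: real assumes "r > 0" "L = r^2 - s^2"
  shows "p * (r^2 - 3*L + 3*L^2/r^2 - L^3/r^4) * (s / r) = p / ((r^2)^2 * r) * s^7"
  using assms(1) unfolding assms(2) by (simp add: field_simps) algebra

lemma H0_G0: assumes "a \<ge> 0" shows "H0 (a^2) a = 8/3 * G0 (a^2) a"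
proof (cases "a = 0")
  case True
  then show ?thesis by (simp add: H0_def P0_def Z0_def G0_def Y0_def)
next
  case False
  then have a: "a > 0" using assms by simp
  have p: "P0 (a^2) a = 8/3*a" using a by (simp add: P0_def field_simps power2_eq_square power3_eq_cube)
  have z: "Z0 (a^2) a = - (exp (-(a^2)) * (8/3*a^4 + 4*a^2 + 2)) / 2"
    by (simp add: Z0_def field_simps eval_nat_numeral)
  show ?thesis unfolding H0_def G0_def Y0_def p z phi3_alt
    by (simp add: field_simps eval_nat_numeral)
qed

lemma H2_G2: assumes "a \<ge> 0" shows "H2 (a^2) a = 8 * G2 (a^2) a"
proof (cases "a = 0")
  case True
  then show ?thesis by (simp add: H2_def P2_def Z2_def G2_def Y2_def Q2_def)
next
  case False
  then have a: "a > 0" using assms by simp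
  have p: "P2 (a^2) a = -16/3*a^3" using a by (simp add: P2_def field_simps power2_eq_square power3_eq_cube)
  have z: "Z2 (a^2) a = - (exp (-(a^2)) * (-16/3*a^6 - 8*a^4 - 4*a^2 + 2)) / 2"
    by (simp add: Z2_def field_simps eval_nat_numeral)
  have q: "Q2 (a^2) a = -2/3*a^3" by (simp add: Q2_def power2_eq_square power3_eq_cube)
  have y: "Y2 (a^2) a = - (exp (-(a^2)) * ((1 - 2*a^2)/3)) / 2" by (simp add: Y2_def)
  show ?thesis unfolding H2_def G2_def p z q y phi3_alt
    by (simp add: field_simps eval_nat_numeral)
qed

theorem mainTheorem4:
  fixes l :: real
  shows "K_int 0 l = 8/3 * I_int 0 l \<and> K_int 2 l = 8 * I_int 2 l"
proof -
  define L where "L = l^2"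
  have L0: "L \<ge> 0" by (simp add: L_def)
  have pos: "s^2 + L > 0" if "s > 0" for s :: real using L0 that by (simp add: add_pos_nonneg)
  have I0: "I_int 0 l = - G0 L (sqrt L)"
    unfolding I_int_def L_def[symmetric]
  proof (rule integral_eval[where h = "\<lambda>r. erfc r"])
    fix s :: real assume s: "s > 0"
    note p = pos[OF s]
    show "erfc (sqrt (s^2 + L)) * (s / sqrt (s^2 + L)) = erfc (sqrt (s^2 + L)) / sqrt (s^2 + L) * s ^ (0 + 1)"
      by simp
    show "isCont (\<lambda>s. erfc (sqrt (s^2 + L)) / sqrt (s^2 + L) * s ^ (0 + 1)) s"
      using p by (intro continuous_intros) auto
    show "erfc (sqrt (s^2 + L)) / sqrt (s^2 + L) * s ^ (0 + 1) \<ge> 0"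
      using s L0 by (intro mult_nonneg_nonneg divide_nonneg_nonneg erfc_nonneg) auto
  qed (use L0 G0_deriv G0_cont G0_lim in auto)
  have I2: "I_int 2 l = - G2 L (sqrt L)"
    unfolding I_int_def L_def[symmetric]
  proof (rule integral_eval[where h = "\<lambda>r. erfc r * (r^2 - L)"])
    fix s :: real assume s: "s > 0"
    note p = pos[OF s]
    show "erfc (sqrt (s^2 + L)) * ((sqrt (s^2 + L))^2 - L) * (s / sqrt (s^2 + L)) = erfc (sqrt (s^2 + L)) / sqrt (s^2 + L) * s ^ (2 + 1)"
      using p by (simp add: field_simps power2_eq_square power3_eq_cube)
    show "isCont (\<lambda>s. erfc (sqrt (s^2 + L)) / sqrt (s^2 + L) * s ^ (2 + 1)) s"
      using p by (intro continuous_intros) auto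
    show "erfc (sqrt (s^2 + L)) / sqrt (s^2 + L) * s ^ (2 + 1) \<ge> 0"
      using s L0 by (intro mult_nonneg_nonneg divide_nonneg_nonneg erfc_nonneg) auto
  qed (use L0 G2_deriv G2_cont G2_lim in auto)
  have K0: "K_int 0 l = - H0 L (sqrt L)"
    unfolding K_int_def L_def[symmetric]
  proof (rule integral_eval[where h = "\<lambda>r. phi3 r * (1 - 2*L/r^2 + L^2/r^4)"])
    fix s :: real assume s: "s > 0"
    note p = pos[OF s]
    have r: "sqrt (s^2 + L) > 0" "L = (sqrt (s^2 + L))^2 - s^2" using p by auto
    show "phi3 (sqrt (s^2 + L)) * (1 - 2*L/(sqrt (s^2 + L))^2 + L^2/(sqrt (s^2 + L))^4) * (s / sqrt (s^2 + L)) = phi3 (sqrt (s^2 + L)) / (s^2 + L) powr (5/2) * s ^ (0 + 5)"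
      unfolding alg0[OF r] using p by (simp add: powr52)
    show "isCont (\<lambda>s. phi3 (sqrt (s^2 + L)) / (s^2 + L) powr (5/2) * s ^ (0 + 5)) s"
      using p by (intro continuous_intros) auto
    show "phi3 (sqrt (s^2 + L)) / (s^2 + L) powr (5/2) * s ^ (0 + 5) \<ge> 0"
      using s L0 by (intro mult_nonneg_nonneg divide_nonneg_nonneg phi3_nonneg) auto
  qed (use L0 H0_deriv H0_cont H0_lim in auto)
  have K2: "K_int 2 l = - H2 L (sqrt L)"
    unfolding K_int_def L_def[symmetric]
  proof (rule integral_eval[where h = "\<lambda>r. phi3 r * (r^2 - 3*L + 3*L^2/r^2 - L^3/r^4)"])
    fix s :: real assume s: "s > 0"
    note p = pos[OF s]
    have r: "sqrt (s^2 + L) > 0" "L = (sqrt (s^2 + L))^2 - s^2" using p by auto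
    show "phi3 (sqrt (s^2 + L)) * ((sqrt (s^2 + L))^2 - 3*L + 3*L^2/(sqrt (s^2 + L))^2 - L^3/(sqrt (s^2 + L))^4) * (s / sqrt (s^2 + L)) = phi3 (sqrt (s^2 + L)) / (s^2 + L) powr (5/2) * s ^ (2 + 5)"
      unfolding alg2[OF r] using p by (simp add: powr52)
    show "isCont (\<lambda>s. phi3 (sqrt (s^2 + L)) / (s^2 + L) powr (5/2) * s ^ (2 + 5)) s"
      using p by (intro continuous_intros) auto
    show "phi3 (sqrt (s^2 + L)) / (s^2 + L) powr (5/2) * s ^ (2 + 5) \<ge> 0"
      using s L0 by (intro mult_nonneg_nonneg divide_nonneg_nonneg phi3_nonneg) auto
  qed (use L0 H2_deriv H2_cont H2_lim in auto)
  have e: "sqrt L = \<bar>l\<bar>" "L = \<bar>l\<bar>^2" by (simp_all add: L_def)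
  show ?thesis
    unfolding I0 I2 K0 K2 unfolding e using H0_G0[of "\<bar>l\<bar>"] H2_G2[of "\<bar>l\<bar>"] by simp
qed

end
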